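(* Let $\alpha>\tfrac12$ and let $f$ be a slice regular function on the circular cone $C(\pi/\alpha)$, continuous on its closure $\overline{C(\pi/\alpha)}$. Suppose the order $\rho$ of $f$ satisfies $\rho<\alpha$. If there exists $M\ge0$ with $|f|\le M$ on $\partial C(\pi/\alpha)$, then $|f|\le M$ on $C(\pi/\alpha)$.
   Context: $\mathbb{H}$ denotes the quaternions, $|q|$ the Euclidean norm, $\mathbb{S}=\{ix_1+jx_2+kx_3: x_1^2+x_2^2+x_3^2=1\}$, and for $I\in\mathbb{S}$, $L_I=\mathbb{R}+\mathbb{R}I$; every $q\in\mathbb{H}$ can be written $q=re^{I\vartheta}=r(\cos\vartheta+I\sin\vartheta)$ with $r=|q|$, $I\in\mathbb{S}$, $\vartheta\in\mathbb{R}$. For $\Omega\subseteq\mathbb{H}$ set $\Omega_I=\Omega\cap L_I$. A function $f:\Omega\to\mathbb{H}$ on an open set $\Omega$ is slice regular if for every $I\in\mathbb{S}$ its restriction $f_I$ to $\Omega_I$ satisfies $\frac12\left(\frac{\partial}{\partial x}+I\frac{\partial}{\partial y}\right)f_I(x+yI)=0$ on $\Omega_I$. For $0<\varphi<2\pi$ the circular cone is $C(\varphi)=\{re^{I\vartheta}: r>0,\ |\vartheta|<\varphi/2,\ I\in\mathbb{S}\}$. For $f$ slice regular on $\Omega$ and continuous up to the boundary, set $M_f(r,\Omega)=\max\{|f(q)|: q\in\overline{\Omega},\ |q|=r\}$ and define the order of $f$ as $\rho=\limsup_{r\to+\infty}\frac{\ln^+\ln^+M_f(r,\Omega)}{\ln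 r}$, where $\ln^+x=\max\{\ln x,0\}$. *)

theory Defs
  imports "HOL-Analysis.Analysis"
begin

text \<open>Quaternions q = r + i x1 + j x2 + k x3 are represented as 4-tuples (r, x1, x2, x3).
The product norm on real*real*real*real is exactly the Euclidean norm on R^4.\<close>

type_synonym quat = "real \<times> real \<times> real \<times> real"

fun qmult :: "quat \<Rightarrow> quat \<Rightarrow> quat" (infixl "\<star>" 70) where
  "qmult (a1, b1, c1, d1) (a2, b2, c2, d2) =
     (a1*a2 - b1*b2 - c1*c2 - d1*d2,
      a1*b2 + b1*a2 + c1*d2 - d1*c2,
      a1*c2 - b1*d2 + c1*a2 + d1*b2,
      a1*d2 + b1*c2 - c1*b2 + d1*a2)"

definition qreal :: "real \<Rightarrow> quat" where
  "qreal x = (x, 0, 0, 0)"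

definition imag_units :: "quat set" where
  "imag_units = {(0, x1, x2, x3) | x1 x2 x3. x1^2 + x2^2 + x3^2 = 1}"

definition slice_pt :: "quat \<Rightarrow> real \<Rightarrow> real \<Rightarrow> quat" where
  "slice_pt I x y = qreal x + y *\<^sub>R I"

definition slice_regular :: "(quat \<Rightarrow> quat) \<Rightarrow> quat set \<Rightarrow> bool" where
  "slice_regular f \<Omega> \<longleftrightarrow> open \<Omega> \<and>
     (\<forall>I\<in>imag_units. \<forall>x y. slice_pt I x y \<in> \<Omega> \<longrightarrow>
        (\<exists>D. ((\<lambda>(s, t). f (slice_pt I s t)) has_derivative D) (at (x, y)) \<and>
             (1/2) *\<^sub>R (D (1, 0) + I \<star> D (0, 1)) = 0))"

definition qexpI :: "quat \<Rightarrow> real \<Rightarrow> quat" where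
  "qexpI I \<theta> = slice_pt I (cos \<theta>) (sin \<theta>)"

definition circ_cone :: "real \<Rightarrow> quat set" where
  "circ_cone \<phi> = {r *\<^sub>R qexpI I \<theta> | r I \<theta>. r > 0 \<and> \<bar>\<theta>\<bar> < \<phi> / 2 \<and> I \<in> imag_units}"

text \<open>ln^+ x = max (ln x) 0 (taken as 0 for x \<le> 1, in particular for x \<le> 0).\<close>
definition lnp :: "real \<Rightarrow> real" where
  "lnp x = (if x \<le> 1 then 0 else ln x)"

definition max_mod :: "(quat \<Rightarrow> quat) \<Rightarrow> quat set \<Rightarrow> real \<Rightarrow> real" where
  "max_mod f \<Omega> r = Sup ((\<lambda>q. norm (f q)) ` {q \<in> closure \<Omega>. norm q = r})"

definition slice_order :: "(quat \<Rightarrow> quat) \<Rightarrow> quat set \<Rightarrow> ereal" where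
  "slice_order f \<Omega> = Limsup at_top (\<lambda>r. ereal (lnp (lnp (max_mod f \<Omega> r)) / ln r))"

end

theory Submission
  imports Defs
begin

definition bint :: "(complex \<Rightarrow> complex) \<Rightarrow> real \<Rightarrow> real \<Rightarrow> real \<Rightarrow> real \<Rightarrow> complex" where
 "bint k a b c d = integral {a..c} (\<lambda>x. k (Complex x b)) + \<i> * integral {b..d} (\<lambda>y. k (Complex c y))
    - integral {a..c} (\<lambda>x. k (Complex x d)) - \<i> * integral {b..d} (\<lambda>y. k (Complex a y))"

definition crect :: "real \<Rightarrow> real \<Rightarrow> real \<Rightarrow> real \<Rightarrow> complex set" where
 "crect a b c d = {z. a \<le> Re z \<and> Re z \<le> c \<and> b \<le> Im z \<and> Im z \<le> d}"

lemma cont_hor: "continuous_on (crect a b c d) k \<Longrightarrow> b \<le> y \<Longrightarrow> y \<le> d \<Longrightarrow> a' \<ge> a \<Longrightarrow> c' \<le> c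
   \<Longrightarrow> continuous_on {a'..c'} (\<lambda>x. k (Complex x y))"
  by (rule continuous_on_compose2[of _ k]) (auto intro!: continuous_intros simp: crect_def Complex_eq)

lemma cont_ver: "continuous_on (crect a b c d) k \<Longrightarrow> a \<le> x \<Longrightarrow> x \<le> c \<Longrightarrow> b' \<ge> b \<Longrightarrow> d' \<le> d
   \<Longrightarrow> continuous_on {b'..d'} (\<lambda>y. k (Complex x y))"
  by (rule continuous_on_compose2[of _ k]) (auto intro!: continuous_intros simp: crect_def Complex_eq)

lemma int_hor: fixes k :: "complex \<Rightarrow> complex" assumes "continuous_on (crect a b c d) k" "b \<le> y" "y \<le> d" "a' \<ge> a" "c' \<le> c"
   shows "(\<lambda>x. k (Complex x y)) integrable_on {a'..c'}"
  by (rule integrable_continuous_real[OF cont_hor[OF assms]])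

lemma int_ver: fixes k :: "complex \<Rightarrow> complex" assumes "continuous_on (crect a b c d) k" "a \<le> x" "x \<le> c" "b' \<ge> b" "d' \<le> d"
   shows "(\<lambda>y. k (Complex x y)) integrable_on {b'..d'}"
  by (rule integrable_continuous_real[OF cont_ver[OF assms]])

lemma bint_split:
  assumes k: "continuous_on (crect a b c d) k" and ac: "a \<le> c" and bd: "b \<le> d"
  defines "m \<equiv> (a+c)/2" and "n \<equiv> (b+d)/2"
  shows "bint k a b c d = bint k a b m n + bint k m b c n + bint k a n m d + bint k m n c d"
proof -
  have am: "a \<le> m" "m \<le> c" "b \<le> n" "n \<le> d" using ac bd by (auto simp: m_def n_def)
  have h1: "integral {a..c} (\<lambda>x. k (Complex x b)) = integral {a..m} (\<lambda>x. k (Complex x b)) + integral {m..c} (\<lambda>x. k (Complex x b))"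
    using Henstock_Kurzweil_Integration.integral_combine[where a=a and c=m and b=c and f="\<lambda>x. k (Complex x b)"] am int_hor[OF k, of b a c] bd by auto
  have h2: "integral {a..c} (\<lambda>x. k (Complex x d)) = integral {a..m} (\<lambda>x. k (Complex x d)) + integral {m..c} (\<lambda>x. k (Complex x d))"
    using Henstock_Kurzweil_Integration.integral_combine[where a=a and c=m and b=c and f="\<lambda>x. k (Complex x d)"] am int_hor[OF k, of d a c] bd by auto
  have v1: "integral {b..d} (\<lambda>y. k (Complex a y)) = integral {b..n} (\<lambda>y. k (Complex a y)) + integral {n..d} (\<lambda>y. k (Complex a y))"
    using Henstock_Kurzweil_Integration.integral_combine[where a=b and c=n and b=d and f="\<lambda>y. k (Complex a y)"] am int_ver[OF k, of a b d] ac by auto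
  have v2: "integral {b..d} (\<lambda>y. k (Complex c y)) = integral {b..n} (\<lambda>y. k (Complex c y)) + integral {n..d} (\<lambda>y. k (Complex c y))"
    using Henstock_Kurzweil_Integration.integral_combine[where a=b and c=n and b=d and f="\<lambda>y. k (Complex c y)"] am int_ver[OF k, of c b d] ac by auto
  show ?thesis unfolding bint_def h1 h2 v1 v2 by (simp add: algebra_simps)
qed

lemma hvd_hor: "((\<lambda>x. Complex x y) has_vector_derivative 1) (at x within S)"
proof -
  have "((\<lambda>x. of_real x + \<i> * of_real y) has_vector_derivative 1) (at x within S)"
    unfolding has_vector_derivative_def
    by (auto intro!: derivative_eq_intros simp: scaleR_conv_of_real)
  then show ?thesis by (simp add: Complex_eq)
qed

lemma hvd_ver: "((\<lambda>y. Complex x y) has_vector_derivative \<i>) (at y within S)"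
proof -
  have "((\<lambda>y. of_real x + \<i> * of_real y) has_vector_derivative \<i>) (at y within S)"
    unfolding has_vector_derivative_def
    by (auto intro!: derivative_eq_intros simp: scaleR_conv_of_real)
  then show ?thesis by (simp add: Complex_eq)
qed

lemma bint_primitive:
  fixes k F :: "complex \<Rightarrow> complex"
  assumes ac: "a \<le> c" and bd: "b \<le> d"
    and F: "\<And>z. z \<in> crect a b c d \<Longrightarrow> (F has_field_derivative k z) (at z)"
  shows "bint k a b c d = 0"
proof -
  have hor: "integral {a..c} (\<lambda>x. k (Complex x y)) = F (Complex c y) - F (Complex a y)"
    if "b \<le> y" "y \<le> d" for y
  proof -
    have dd: "((\<lambda>x. F (Complex x y)) has_vector_derivative k (Complex x y)) (at x within {a..c})"
      if "x \<in> {a..c}" for x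
    proof -
      have "(F has_field_derivative k (Complex x y)) (at (Complex x y))"
        using that \<open>b \<le> y\<close> \<open>y \<le> d\<close> by (intro F) (auto simp: crect_def)
      from field_vector_diff_chain_at[OF hvd_hor this]
      show ?thesis by (auto simp: o_def intro: has_vector_derivative_at_within)
    qed
    have "((\<lambda>x. k (Complex x y)) has_integral (F (Complex c y) - F (Complex a y))) {a..c}"
      by (rule fundamental_theorem_of_calculus[OF ac dd])
    then show ?thesis by (rule integral_unique)
  qed
  have ver: "\<i> * integral {b..d} (\<lambda>y. k (Complex x y)) = F (Complex x d) - F (Complex x b)"
    if "a \<le> x" "x \<le> c" for x
  proof -
    have dd: "((\<lambda>y. F (Complex x y)) has_vector_derivative \<i> * k (Complex x y)) (at y within {b..d})"
      if "y \<in> {b..d}" for y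
    proof -
      have "(F has_field_derivative k (Complex x y)) (at (Complex x y))"
        using that \<open>a \<le> x\<close> \<open>x \<le> c\<close> by (intro F) (auto simp: crect_def)
      from field_vector_diff_chain_at[OF hvd_ver this]
      show ?thesis by (auto simp: o_def intro: has_vector_derivative_at_within)
    qed
    have "((\<lambda>y. \<i> * k (Complex x y)) has_integral (F (Complex x d) - F (Complex x b))) {b..d}"
      by (rule fundamental_theorem_of_calculus[OF bd dd])
    then have "integral {b..d} (\<lambda>y. \<i> * k (Complex x y)) = F (Complex x d) - F (Complex x b)"
      by (rule integral_unique)
    then show ?thesis by simp
  qed
  show ?thesis unfolding bint_def using hor[of b] hor[of d] ver[of a] ver[of c] ac bd by simp
qed

lemma bint_diff:
  fixes k1 k2 :: "complex \<Rightarrow> complex"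
  assumes k1: "continuous_on (crect a b c d) k1" and k2: "continuous_on (crect a b c d) k2"
    and ac: "a \<le> c" and bd: "b \<le> d"
  shows "bint (\<lambda>z. k1 z - k2 z) a b c d = bint k1 a b c d - bint k2 a b c d"
  unfolding bint_def
  using ac bd
  by (simp add: integral_diff int_hor[OF k1] int_hor[OF k2] int_ver[OF k1] int_ver[OF k2] algebra_simps)

lemma norm4: "norm (A + B - C - D) \<le> norm A + norm B + norm C + norm (D::'a::real_normed_vector)"
proof -
  have "norm (A + B - C - D) \<le> norm (A + B - C) + norm D" by (rule norm_triangle_ineq4)
  also have "norm (A + B - C) \<le> norm (A + B) + norm C" by (rule norm_triangle_ineq4)
  also have "norm (A + B) \<le> norm A + norm B" by (rule norm_triangle_ineq)
  finally show ?thesis by simp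
qed

lemma bint_bound:
  fixes k :: "complex \<Rightarrow> complex"
  assumes k: "continuous_on (crect a b c d) k" and ac: "a \<le> c" and bd: "b \<le> d"
    and B: "\<And>z. z \<in> crect a b c d \<Longrightarrow> norm (k z) \<le> B"
  shows "norm (bint k a b c d) \<le> 2 * B * ((c - a) + (d - b))"
proof -
  have h: "norm (integral {a..c} (\<lambda>x. k (Complex x y))) \<le> B * (c - a)" if "b \<le> y" "y \<le> d" for y
    by (rule integral_bound[OF ac cont_hor[OF k that order_refl order_refl]]) (use that in \<open>auto intro!: B simp: crect_def\<close>)
  have v: "norm (integral {b..d} (\<lambda>y. k (Complex x y))) \<le> B * (d - b)" if "a \<le> x" "x \<le> c" for x
    by (rule integral_bound[OF bd cont_ver[OF k that order_refl order_refl]]) (use that in \<open>auto intro!: B simp: crect_def\<close>)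
  have "norm (bint k a b c d) \<le> norm (integral {a..c} (\<lambda>x. k (Complex x b))) + norm (integral {b..d} (\<lambda>y. k (Complex c y)))
     + norm (integral {a..c} (\<lambda>x. k (Complex x d))) + norm (integral {b..d} (\<lambda>y. k (Complex a y)))"
    unfolding bint_def using norm4 by (metis norm_ii norm_mult mult_1)
  also have "\<dots> \<le> B * (c - a) + B * (d - b) + B * (c - a) + B * (d - b)"
    using h[of b] h[of d] v[of a] v[of c] ac bd by (intro add_mono) auto
  finally show ?thesis by (simp add: algebra_simps)
qed

type_synonym rc4 = "real \<times> real \<times> real \<times> real"

definition ra :: "rc4 \<Rightarrow> real" where "ra R = fst R"
definition rb :: "rc4 \<Rightarrow> real" where "rb R = fst (snd R)"
definition rc :: "rc4 \<Rightarrow> real" where "rc R = fst (snd (snd R))"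
definition rd :: "rc4 \<Rightarrow> real" where "rd R = snd (snd (snd R))"

definition bintT where "bintT k R = bint k (ra R) (rb R) (rc R) (rd R)"

definition subq :: "rc4 \<Rightarrow> rc4 \<Rightarrow> bool" where
  "subq R Q \<longleftrightarrow> ra R \<le> ra Q \<and> rc Q \<le> rc R \<and> rb R \<le> rb Q \<and> rd Q \<le> rd R \<and>
     rc Q - ra Q = (rc R - ra R) / 2 \<and> rd Q - rb Q = (rd R - rb R) / 2"

definition pick where "pick k R = (SOME Q. subq R Q \<and> norm (bintT k R) \<le> 4 * norm (bintT k Q))"

lemma pick_ex:
  fixes k :: "complex \<Rightarrow> complex"
  assumes k: "continuous_on (crect (ra R) (rb R) (rc R) (rd R)) k" and "ra R \<le> rc R" "rb R \<le> rd R"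
  shows "\<exists>Q. subq R Q \<and> norm (bintT k R) \<le> 4 * norm (bintT k Q)"
proof (rule ccontr)
  assume H: "\<not> ?thesis"
  define a where "a = ra R"
  define b where "b = rb R"
  define c where "c = rc R"
  define d where "d = rd R"
  define m where "m = (a+c)/2"
  define n where "n = (b+d)/2"
  have ac: "a \<le> c" "b \<le> d" using assms by (auto simp: a_def b_def c_def d_def)
  have sp: "bintT k R = bint k a b m n + bint k m b c n + bint k a n m d + bint k m n c d"
    unfolding bintT_def a_def b_def c_def d_def m_def n_def
    by (rule bint_split) (use assms in auto)
  have q: "norm (bintT k R) > 4 * norm (bintT k Q)" if "subq R Q" for Q using H that by (metis not_le)
  have s1: "subq R (a,b,m,n)" "subq R (m,b,c,n)" "subq R (a,n,m,d)" "subq R (m,n,c,d)"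
    using ac by (auto simp: subq_def a_def b_def c_def d_def m_def n_def ra_def rb_def rc_def rd_def field_simps)
  have t: "bintT k (a,b,m,n) = bint k a b m n" "bintT k (m,b,c,n) = bint k m b c n"
     "bintT k (a,n,m,d) = bint k a n m d" "bintT k (m,n,c,d) = bint k m n c d"
    by (simp_all add: bintT_def ra_def rb_def rc_def rd_def)
  have "norm (bintT k R) \<le> norm (bint k a b m n) + norm (bint k m b c n) + norm (bint k a n m d) + norm (bint k m n c d)"
  proof -
    have "norm (bintT k R) \<le> norm (bint k a b m n + bint k m b c n + bint k a n m d) + norm (bint k m n c d)"
      unfolding sp by (rule norm_triangle_ineq)
    also have "norm (bint k a b m n + bint k m b c n + bint k a n m d) \<le> norm (bint k a b m n + bint k m b c n) + norm (bint k a n m d)"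
      by (rule norm_triangle_ineq)
    also have "norm (bint k a b m n + bint k m b c n) \<le> norm (bint k a b m n) + norm (bint k m b c n)"
      by (rule norm_triangle_ineq)
    finally show ?thesis by simp
  qed
  moreover note q[OF s1(1)] q[OF s1(2)] q[OF s1(3)] q[OF s1(4)]
  ultimately show False unfolding t by linarith
qed

primrec seqR :: "(complex \<Rightarrow> complex) \<Rightarrow> rc4 \<Rightarrow> nat \<Rightarrow> rc4" where
  "seqR k R 0 = R"
| "seqR k R (Suc n) = pick k (seqR k R n)"

lemma seqR_props:
  fixes k :: "complex \<Rightarrow> complex"
  assumes k: "continuous_on (crect (ra R) (rb R) (rc R) (rd R)) k" and ac: "ra R \<le> rc R" and bd: "rb R \<le> rd R"
  shows "ra R \<le> ra (seqR k R n) \<and> rc (seqR k R n) \<le> rc R \<and> rb R \<le> rb (seqR k R n) \<and> rd (seqR k R n) \<le> rd R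
    \<and> rc (seqR k R n) - ra (seqR k R n) = (rc R - ra R) / 2^n
    \<and> rd (seqR k R n) - rb (seqR k R n) = (rd R - rb R) / 2^n
    \<and> norm (bintT k R) \<le> 4^n * norm (bintT k (seqR k R n))
    \<and> subq (seqR k R n) (seqR k R (Suc n))"
proof (induction n)
  case 0
  have ex: "\<exists>Q. subq R Q \<and> norm (bintT k R) \<le> 4 * norm (bintT k Q)"
    by (rule pick_ex[OF k ac bd])
  have "subq R (pick k R)" unfolding pick_def using someI_ex[OF ex] by blast
  then show ?case by simp
next
  case (Suc n)
  define Q where "Q = seqR k R n"
  define P where "P = seqR k R (Suc n)"
  have IH: "ra R \<le> ra Q" "rc Q \<le> rc R" "rb R \<le> rb Q" "rd Q \<le> rd R"
    "rc Q - ra Q = (rc R - ra R) / 2^n" "rd Q - rb Q = (rd R - rb R) / 2^n"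
    "norm (bintT k R) \<le> 4^n * norm (bintT k Q)" "subq Q P"
    using Suc.IH by (auto simp: Q_def P_def)
  have exQ: "\<exists>X. subq Q X \<and> norm (bintT k Q) \<le> 4 * norm (bintT k X)"
  proof (rule pick_ex)
    show "continuous_on (crect (ra Q) (rb Q) (rc Q) (rd Q)) k"
      by (rule continuous_on_subset[OF k]) (use IH in \<open>auto simp: crect_def\<close>)
    have "rc Q - ra Q \<ge> 0" unfolding IH(5) using ac by simp
    moreover have "rd Q - rb Q \<ge> 0" unfolding IH(6) using bd by simp
    ultimately show "ra Q \<le> rc Q" "rb Q \<le> rd Q" by auto
  qed
  have PQ: "P = pick k Q" by (simp add: P_def Q_def)
  have sP: "subq Q P" "norm (bintT k Q) \<le> 4 * norm (bintT k P)"
    unfolding PQ pick_def using someI_ex[OF exQ] by blast+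
  have Pprops: "ra R \<le> ra P" "rc P \<le> rc R" "rb R \<le> rb P" "rd P \<le> rd R"
    "rc P - ra P = (rc R - ra R) / 2^Suc n" "rd P - rb P = (rd R - rb R) / 2^Suc n"
  proof -
    have e: "rc P - ra P = (rc Q - ra Q) / 2" "rd P - rb P = (rd Q - rb Q) / 2"
      "ra Q \<le> ra P" "rc P \<le> rc Q" "rb Q \<le> rb P" "rd P \<le> rd Q"
      using sP(1) unfolding subq_def by auto
    show "ra R \<le> ra P" "rc P \<le> rc R" "rb R \<le> rb P" "rd P \<le> rd R"
      using e IH by linarith+
    show "rc P - ra P = (rc R - ra R) / 2^Suc n" unfolding e(1) IH(5) by simp
    show "rd P - rb P = (rd R - rb R) / 2^Suc n" unfolding e(2) IH(6) by simp
  qed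
  have "norm (bintT k R) \<le> 4^Suc n * norm (bintT k P)"
  proof -
    have "norm (bintT k R) \<le> 4^n * norm (bintT k Q)" by (rule IH(7))
    also have "\<dots> \<le> 4^n * (4 * norm (bintT k P))" by (rule mult_left_mono[OF sP(2)]) simp
    finally show ?thesis by (simp add: mult_ac)
  qed
  moreover have exP: "\<exists>X. subq P X \<and> norm (bintT k P) \<le> 4 * norm (bintT k X)"
  proof (rule pick_ex)
    show "continuous_on (crect (ra P) (rb P) (rc P) (rd P)) k"
      by (rule continuous_on_subset[OF k]) (use Pprops in \<open>auto simp: crect_def\<close>)
    have "rc P - ra P \<ge> 0" unfolding Pprops(5) using ac by simp
    moreover have "rd P - rb P \<ge> 0" unfolding Pprops(6) using bd by simp
    ultimately show "ra P \<le> rc P" "rb P \<le> rd P" by auto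
  qed
  moreover have "subq P (pick k P)" unfolding pick_def using someI_ex[OF exP] by blast
  moreover have "seqR k R (Suc (Suc n)) = pick k P" by (simp add: P_def)
  ultimately show ?case using Pprops unfolding P_def by simp
qed

lemma bint_linear_zero:
  fixes p A B :: complex
  assumes "a \<le> c" "b \<le> d"
  shows "bint (\<lambda>z. A + (z - p) * B) a b c d = 0"
proof (rule bint_primitive[OF assms, of "\<lambda>z. A * z + B * (z - p)^2 / 2"])
  fix z
  show "((\<lambda>z. A * z + B * (z - p)^2 / 2) has_field_derivative A + (z - p) * B) (at z)"
    by (auto intro!: derivative_eq_intros simp: field_simps)
qed

theorem goursat:
  fixes k :: "complex \<Rightarrow> complex"
  assumes S: "open S" "crect a b c d \<subseteq> S"
    and hol: "\<And>z. z \<in> S \<Longrightarrow> k field_differentiable (at z)"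
    and ac: "a \<le> c" and bd: "b \<le> d"
  shows "bint k a b c d = 0"
proof (rule ccontr)
  assume nz: "bint k a b c d \<noteq> 0"
  define R where "R = (a,b,c,d)"
  have kc: "continuous_on (crect a b c d) k"
    using S hol by (meson continuous_at_imp_continuous_on field_differentiable_imp_continuous_at subsetD)
  have R: "ra R = a" "rb R = b" "rc R = c" "rd R = d" by (simp_all add: R_def ra_def rb_def rc_def rd_def)
  define A where "A n = ra (seqR k R n)" for n
  define B where "B n = rb (seqR k R n)" for n
  define C where "C n = rc (seqR k R n)" for n
  define D where "D n = rd (seqR k R n)" for n
  have P: "a \<le> A n \<and> C n \<le> c \<and> b \<le> B n \<and> D n \<le> d \<and> C n - A n = (c - a) / 2^n \<and> D n - B n = (d - b) / 2^n
    \<and> norm (bint k a b c d) \<le> 4^n * norm (bint k (A n) (B n) (C n) (D n))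
    \<and> A n \<le> A (Suc n) \<and> C (Suc n) \<le> C n \<and> B n \<le> B (Suc n) \<and> D (Suc n) \<le> D n" for n
    using seqR_props[of R k n] kc ac bd unfolding R A_def B_def C_def D_def bintT_def subq_def by auto
  have AC: "A n \<le> C n" "B n \<le> D n" for n
  proof -
    have "C n - A n \<ge> 0" "D n - B n \<ge> 0" using P[of n] ac bd by auto
    then show "A n \<le> C n" "B n \<le> D n" by auto
  qed
  have incA: "incseq A" and decC: "decseq C" and incB: "incseq B" and decD: "decseq D"
    using P by (auto intro!: incseq_SucI decseq_SucI)
  have AleC: "A n \<le> C m" for n m
    using incA[THEN monoD, of n "max n m"] decC[THEN antimonoD, of m "max n m"] AC[of "max n m"] by auto
  have BleD: "B n \<le> D m" for n m
    using incB[THEN monoD, of n "max n m"] decD[THEN antimonoD, of m "max n m"] AC[of "max n m"] by auto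
  define p1 where "p1 = (SUP n. A n)"
  define p2 where "p2 = (SUP n. B n)"
  have bddA: "bdd_above (range A)" by (rule bdd_aboveI2[where M="C 0"]) (rule AleC)
  have bddB: "bdd_above (range B)" by (rule bdd_aboveI2[where M="D 0"]) (rule BleD)
  have p1: "A n \<le> p1" "p1 \<le> C n" for n
    unfolding p1_def using bddA AleC by (auto intro: cSUP_upper cSUP_least)
  have p2: "B n \<le> p2" "p2 \<le> D n" for n
    unfolding p2_def using bddB BleD by (auto intro: cSUP_upper cSUP_least)
  define p where "p = Complex p1 p2"
  have "p \<in> crect a b c d" using p1[of 0] p2[of 0] P[of 0] by (auto simp: p_def crect_def)
  then have "k field_differentiable (at p)" using S hol by auto
  then obtain k' where k': "(k has_field_derivative k') (at p)" unfolding field_differentiable_def by auto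
  define B0 where "B0 = norm (bint k a b c d)"
  have B0: "B0 > 0" using nz by (simp add: B0_def)
  define s where "s = (c - a) + (d - b)"
  have s0: "s \<ge> 0" using ac bd by (simp add: s_def)
  define \<epsilon> where "\<epsilon> = B0 / (4 * (s^2 + 1))"
  have \<epsilon>: "\<epsilon> > 0" using B0 unfolding \<epsilon>_def by (intro divide_pos_pos) (auto intro: add_nonneg_pos)
  have eqf: "(\<lambda>h. h * k') = (*) k'" by (auto simp: fun_eq_iff mult.commute)
  from k' have "(k has_derivative (\<lambda>h. h * k')) (at p)" unfolding eqf by (simp add: has_field_derivative_def)
  then obtain \<delta> where \<delta>: "\<delta> > 0" and dd: "\<And>y. norm (y - p) < \<delta> \<Longrightarrow> norm (k y - k p - (y - p) * k') \<le> \<epsilon> * norm (y - p)"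
    unfolding has_derivative_at_alt using \<epsilon> by blast
  obtain n where n: "s / \<delta> < 2^n" using real_arch_pow[of 2 "s / \<delta>"] by auto
  have sn: "s / 2^n < \<delta>" using n \<delta> by (simp add: field_simps)
  define g where "g z = k z - (k p + (z - p) * k')" for z
  have sub: "crect (A n) (B n) (C n) (D n) \<subseteq> crect a b c d" using P[of n] by (auto simp: crect_def)
  have kcn: "continuous_on (crect (A n) (B n) (C n) (D n)) k" using continuous_on_subset[OF kc sub] .
  have lc: "continuous_on (crect (A n) (B n) (C n) (D n)) (\<lambda>z. k p + (z - p) * k')"
    by (intro continuous_intros)
  have "bint g (A n) (B n) (C n) (D n) = bint k (A n) (B n) (C n) (D n) - bint (\<lambda>z. k p + (z - p) * k') (A n) (B n) (C n) (D n)"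
    unfolding g_def by (rule bint_diff[OF kcn lc AC])
  also have "bint (\<lambda>z. k p + (z - p) * k') (A n) (B n) (C n) (D n) = 0"
    by (rule bint_linear_zero[OF AC])
  finally have gk: "bint g (A n) (B n) (C n) (D n) = bint k (A n) (B n) (C n) (D n)" by simp
  have gb: "norm (g z) \<le> \<epsilon> * (s / 2^n)" if z: "z \<in> crect (A n) (B n) (C n) (D n)" for z
  proof -
    have "norm (z - p) \<le> \<bar>Re (z - p)\<bar> + \<bar>Im (z - p)\<bar>" by (rule cmod_le)
    also have "\<dots> \<le> (C n - A n) + (D n - B n)"
      using z p1[of n] p2[of n] by (auto simp: crect_def p_def)
    also have "\<dots> = s / 2^n" using P[of n] by (simp add: s_def add_divide_distrib)
    finally have zp: "norm (z - p) \<le> s / 2^n" .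
    have "norm (g z) \<le> \<epsilon> * norm (z - p)" unfolding g_def using dd[of z] zp sn by (simp add: algebra_simps)
    also have "\<dots> \<le> \<epsilon> * (s / 2^n)" using zp \<epsilon> by (intro mult_left_mono) auto
    finally show ?thesis .
  qed
  have gcn: "continuous_on (crect (A n) (B n) (C n) (D n)) g"
    unfolding g_def by (intro continuous_intros kcn)
  have "norm (bint g (A n) (B n) (C n) (D n)) \<le> 2 * (\<epsilon> * (s / 2^n)) * ((C n - A n) + (D n - B n))"
    by (rule bint_bound[OF gcn AC gb])
  also have "(C n - A n) + (D n - B n) = s / 2^n" using P[of n] by (simp add: s_def add_divide_distrib)
  finally have b1: "norm (bint k (A n) (B n) (C n) (D n)) \<le> 2 * \<epsilon> * s^2 / 4^n"
    by (simp add: gk power2_eq_square power_mult_distrib[symmetric] field_simps)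
  have "B0 \<le> 4^n * norm (bint k (A n) (B n) (C n) (D n))" using P[of n] by (simp add: B0_def)
  also have "\<dots> \<le> 4^n * (2 * \<epsilon> * s^2 / 4^n)" by (rule mult_left_mono[OF b1]) simp
  also have "\<dots> = 2 * \<epsilon> * s^2" by simp
  also have "\<dots> < B0"
  proof -
    have pos: "4 * (s^2 + 1) > 0" by (simp add: add_nonneg_pos)
    have "2 * \<epsilon> * s^2 = B0 * (2 * s^2) / (4 * (s^2 + 1))" unfolding \<epsilon>_def by simp
    also have "\<dots> < B0 * (4 * (s^2 + 1)) / (4 * (s^2 + 1))"
      using B0 pos by (intro divide_strict_right_mono mult_strict_left_mono) auto
    also have "\<dots> = B0" using pos by simp
    finally show ?thesis .
  qed
  finally show False by simp
qed

lemma cis_Complex: "Complex (cos t) (sin t) = cis t" by (simp add: complex_eq_iff)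

lemma mvp:
  fixes h :: "complex \<Rightarrow> complex"
  assumes hol: "\<And>z. z \<in> ball z1 \<rho> \<Longrightarrow> h field_differentiable (at z)" and r: "0 < r" "r < \<rho>"
  shows "integral {-pi..pi} (\<lambda>t. h (z1 + of_real r * cis t)) = 2 * pi * h z1"
proof -
  define k where "k w = h (z1 + exp w)" for w
  define S where "S = {w. Re w < ln \<rho>}"
  have \<rho>: "\<rho> > 0" using r by simp
  have oS: "open S" unfolding S_def by (rule open_halfspace_Re_lt)
  have inball: "z1 + exp w \<in> ball z1 \<rho>" if "w \<in> S" for w
  proof -
    have "norm (exp w) = exp (Re w)" by simp
    also have "\<dots> < exp (ln \<rho>)" using that by (simp add: S_def)
    also have "\<dots> = \<rho>" using \<rho> by simp
    finally show ?thesis by (simp add: dist_norm)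
  qed
  have kd: "k field_differentiable (at w)" if "w \<in> S" for w
  proof -
    have "(\<lambda>w. z1 + exp w) field_differentiable (at w)"
      by (intro derivative_intros field_differentiable_add field_differentiable_const) (simp add: field_differentiable_within_exp)
    note field_differentiable_compose[OF this hol[OF inball[OF that]]]
    moreover have "k = (\<lambda>w. h (z1 + exp w))" by (rule ext) (simp add: k_def)
    ultimately show ?thesis by (simp add: o_def)
  qed
  have kc: "continuous_on S k"
    using kd by (meson continuous_at_imp_continuous_on field_differentiable_imp_continuous_at)
  define \<Phi> where "\<Phi> s = integral {-pi..pi} (\<lambda>t. k (Complex s t))" for s
  have kcs: "continuous_on {-pi..pi} (\<lambda>t. k (Complex s t))" if "s < ln \<rho>" for s
    by (rule continuous_on_compose2[OF kc]) (use that in \<open>auto intro!: continuous_intros simp: S_def Complex_eq\<close>)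
  have const: "\<Phi> s1 = \<Phi> s2" if "s1 \<le> s2" "s2 < ln \<rho>" for s1 s2
  proof -
    have "bint k s1 (-pi) s2 pi = 0"
      by (rule goursat[OF oS _ kd]) (use that in \<open>auto simp: crect_def S_def\<close>)
    moreover have "k (Complex x (-pi)) = k (Complex x pi)" for x
      by (simp add: k_def exp_Complex)
    ultimately show ?thesis unfolding bint_def \<Phi>_def by simp
  qed
  have Phir: "\<Phi> (ln r) = integral {-pi..pi} (\<lambda>t. h (z1 + of_real r * cis t))"
    unfolding \<Phi>_def k_def using r by (simp add: exp_Complex cis_Complex)
  show ?thesis
  proof (rule ccontr)
    assume ne: "integral {-pi..pi} (\<lambda>t. h (z1 + of_real r * cis t)) \<noteq> 2 * pi * h z1"
    define D where "D = norm (\<Phi> (ln r) - 2 * pi * h z1)"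
    have D: "D > 0" using ne Phir by (simp add: D_def)
    define e where "e = D / (4 * pi)"
    have e: "e > 0" using D by (simp add: e_def)
    have "continuous (at z1) h"
      using hol[of z1] \<rho> by (simp add: field_differentiable_imp_continuous_at)
    then obtain \<delta> where \<delta>: "\<delta> > 0" and hd: "\<And>z. dist z z1 < \<delta> \<Longrightarrow> dist (h z) (h z1) < e"
      unfolding continuous_at_eps_delta using e by blast
    define s where "s = ln (min r (\<delta>/2))"
    have es: "exp s = min r (\<delta>/2)" using r \<delta> by (simp add: s_def)
    have sr: "s \<le> ln r" using r \<delta> by (simp add: s_def)
    have "\<Phi> s = \<Phi> (ln r)" by (rule const[OF sr]) (use r in simp)
    have "ln r < ln \<rho>" using r by simp
    then have slr: "s < ln \<rho>" using sr by linarith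
    have "\<Phi> s - 2 * pi * h z1 = integral {-pi..pi} (\<lambda>t. k (Complex s t) - h z1)"
      unfolding \<Phi>_def
      by (subst integral_diff) (auto intro!: integrable_continuous_real kcs slr simp: content_real scaleR_conv_of_real)
    also have "norm \<dots> \<le> e * (pi - (-pi))"
    proof (rule integral_bound)
      show "continuous_on {-pi..pi} (\<lambda>t. k (Complex s t) - h z1)"
        by (intro continuous_intros kcs slr)
      fix t assume "t \<in> {-pi..pi}"
      have "dist (z1 + exp (Complex s t)) z1 < \<delta>"
        using es \<delta> by (simp add: dist_norm)
      from hd[OF this] show "norm (k (Complex s t) - h z1) \<le> e"
        by (simp add: k_def dist_norm)
    qed simp
    finally have "D \<le> e * (2 * pi)" using \<open>\<Phi> s = \<Phi> (ln r)\<close> by (simp add: D_def)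
    then show False using D by (simp add: e_def)
  qed
qed

theorem maxprin:
  fixes h :: "complex \<Rightarrow> complex"
  assumes bU: "bounded U" and oU: "open U" and hc: "continuous_on (closure U) h"
    and hol: "\<And>z. z \<in> U \<Longrightarrow> h field_differentiable (at z)"
    and fr: "\<And>z. z \<in> closure U \<Longrightarrow> z \<notin> U \<Longrightarrow> norm (h z) \<le> M"
    and M: "M \<ge> 0" and z0: "z0 \<in> U"
  shows "norm (h z0) \<le> M"
proof (rule ccontr)
  assume "\<not> ?thesis"
  then have z0M: "norm (h z0) > M" by simp
  have cU: "compact (closure U)" using bU bounded_closure by (simp add: compact_eq_bounded_closed)
  have nc: "continuous_on (closure U) (\<lambda>z. norm (h z))" by (intro continuous_intros hc)
  obtain zs where zs: "zs \<in> closure U" and zmax: "\<And>y. y \<in> closure U \<Longrightarrow> norm (h y) \<le> norm (h zs)"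
    using continuous_attains_sup[OF cU _ nc] z0 closure_subset by blast
  define m where "m = norm (h zs)"
  have mM: "m > M" using zmax[of z0] z0 closure_subset z0M by (force simp: m_def)
  define K where "K = {z \<in> closure U. norm (h z) = m}"
  have "closed K" unfolding K_def by (rule continuous_closed_preimage_constant[OF nc closed_closure])
  moreover have "bounded K" using bounded_closure[OF bU] by (rule bounded_subset) (auto simp: K_def)
  ultimately have cK: "compact K" by (simp add: compact_eq_bounded_closed)
  have "zs \<in> K" using zs by (simp add: K_def m_def)
  then obtain z1 where z1: "z1 \<in> K" and z1max: "\<And>y. y \<in> K \<Longrightarrow> Re y \<le> Re z1"
  proof -
    have "continuous_on K Re" by (intro continuous_intros)
    then show ?thesis using continuous_attains_sup[OF cK, of Re] \<open>zs \<in> K\<close> that by blast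
  qed
  have z1U: "z1 \<in> U" using z1 fr mM by (force simp: K_def)
  obtain \<rho> where \<rho>: "\<rho> > 0" "ball z1 \<rho> \<subseteq> U" using oU z1U open_contains_ball by blast
  define r where "r = \<rho> / 2"
  have r: "0 < r" "r < \<rho>" using \<rho> by (auto simp: r_def)
  have mv: "integral {-pi..pi} (\<lambda>t. h (z1 + of_real r * cis t)) = 2 * pi * h z1"
    by (rule mvp[OF hol r]) (use \<rho> in auto)
  have inU: "z1 + of_real r * cis t \<in> U" for t
    using \<rho> r by (intro subsetD[OF \<rho>(2)]) (simp add: dist_norm norm_mult)
  have hcirc: "continuous_on {-pi..pi} (\<lambda>t. h (z1 + of_real r * cis t))"
    by (rule continuous_on_compose2[OF hc]) (use inU closure_subset in \<open>auto intro!: continuous_intros\<close>)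
  have m0: "m > 0" using mM M by linarith
  have hz1: "norm (h z1) = m" using z1 by (simp add: K_def)
  define u where "u = cnj (h z1) / of_real m"
  have nu: "norm u = 1" using hz1 m0 by (simp add: u_def norm_divide)
  define \<phi> where "\<phi> t = m - Re (u * h (z1 + of_real r * cis t))" for t
  have I1: "((\<lambda>t. h (z1 + of_real r * cis t)) has_integral (2 * pi * h z1)) {-pi..pi}"
    using mv integrable_continuous_real[OF hcirc] by (metis has_integral_integral)
  have I2: "((\<lambda>t. Re (u * h (z1 + of_real r * cis t))) has_integral Re (u * (2 * pi * h z1))) {-pi..pi}"
    using has_integral_linear[OF has_integral_mult_right[OF I1, of u] bounded_linear_Re] by (simp add: o_def)
  have "Re (u * (2 * pi * h z1)) = 2 * pi * m"
  proof -
    have "u * h z1 = of_real m"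
      using m0 hz1 by (simp add: u_def complex_norm_square[symmetric] mult.commute power2_eq_square)
    moreover have e: "u * (2 * pi * h z1) = complex_of_real (2 * pi) * (u * h z1)" by (simp add: mult_ac)
    ultimately show ?thesis unfolding e by (simp only: of_real_mult[symmetric] Re_complex_of_real)
  qed
  with I2 have I2': "((\<lambda>t. Re (u * h (z1 + of_real r * cis t))) has_integral (2 * pi * m)) {-pi..pi}" by simp
  have I3: "(\<phi> has_integral 0) (cbox (-pi) pi)"
    using has_integral_diff[OF has_integral_const_real[of m "-pi" pi] I2'] unfolding \<phi>_def
    by (simp add: cbox_interval content_real)
  have phinn: "0 \<le> \<phi> t" for t
  proof -
    have "Re (u * h (z1 + of_real r * cis t)) \<le> norm (u * h (z1 + of_real r * cis t))" by (rule complex_Re_le_cmod)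
    also have "\<dots> = norm (h (z1 + of_real r * cis t))" by (simp add: norm_mult nu)
    also have "\<dots> \<le> m" unfolding m_def using inU closure_subset by (intro zmax) auto
    finally show ?thesis by (simp add: \<phi>_def)
  qed
  have phic: "continuous_on (cbox (-pi) pi) \<phi>"
    unfolding \<phi>_def cbox_interval by (intro continuous_intros hcirc)
  have "\<phi> 0 = 0"
    by (rule has_integral_0_cbox_imp_0[OF phic _ I3]) (auto simp: phinn box_real, (insert pi_gt_zero, linarith)+)
  then have "Re (u * h (z1 + of_real r)) = m" by (simp add: \<phi>_def)
  moreover have "Re (u * h (z1 + of_real r)) \<le> norm (h (z1 + of_real r))"
    using complex_Re_le_cmod[of "u * h (z1 + of_real r)"] by (simp add: norm_mult nu)
  moreover have "norm (h (z1 + of_real r)) \<le> m" unfolding m_def using inU[of 0] closure_subset by (intro zmax) auto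
  ultimately have "z1 + of_real r \<in> K" using inU[of 0] closure_subset by (auto simp: K_def)
  from z1max[OF this] show False using r by simp
qed

definition sector :: "real \<Rightarrow> complex set" where "sector A = {z. norm z * cos A < Re z}"
definition csector :: "real \<Rightarrow> complex set" where "csector A = {z. norm z * cos A \<le> Re z}"

lemma Re_eq_norm_cos_Ln: "z \<noteq> 0 \<Longrightarrow> Re z = norm z * cos (Im (Ln z))"
proof -
  assume z: "z \<noteq> 0"
  have "Re z = Re (exp (Ln z))" using z by (simp add: exp_Ln)
  also have "\<dots> = norm z * cos (Im (Ln z))" unfolding Re_exp using z by (simp del: exp_Ln)
  finally show ?thesis .
qed

lemma csector_arg:
  assumes A: "0 < A" "A < pi" and z: "z \<noteq> 0" "z \<in> csector A"
  shows "\<bar>Im (Ln z)\<bar> \<le> A"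
proof -
  define \<theta> where "\<theta> = Im (Ln z)"
  have nz: "norm z > 0" using z by simp
  have "norm z * cos A \<le> norm z * cos \<theta>" using z Re_eq_norm_cos_Ln[OF z(1)] by (simp add: csector_def \<theta>_def)
  then have "cos A \<le> cos \<bar>\<theta>\<bar>" using nz by (simp add: mult_le_cancel_left_pos)
  moreover have "\<bar>\<theta>\<bar> \<le> pi" using mpi_less_Im_Ln[of z] Im_Ln_le_pi[of z] z by (auto simp: \<theta>_def)
  ultimately show ?thesis using cos_mono_le_eq[of A "\<bar>\<theta>\<bar>"] A by (simp add: \<theta>_def)
qed

lemma Re_powr_real: "z \<noteq> 0 \<Longrightarrow> Re (z powr complex_of_real b) = norm z powr b * cos (b * Im (Ln z))"
proof -
  assume z: "z \<noteq> 0"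
  have "z powr complex_of_real b = exp (complex_of_real b * Ln z)" using z by (simp add: powr_def)
  then have "Re (z powr complex_of_real b) = exp (b * ln (norm z)) * cos (b * Im (Ln z))"
    using z by (simp add: Re_exp)
  also have "exp (b * ln (norm z)) = norm z powr b" using z by (simp add: powr_def)
  finally show ?thesis .
qed

lemma Re_powr_lb:
  assumes A: "0 < A" "A < pi" and b: "0 \<le> b" "b * A \<le> pi" and z: "z \<in> csector A"
  shows "norm z powr b * cos (b * A) \<le> Re (z powr complex_of_real b)"
proof (cases "z = 0")
  case True then show ?thesis by simp
next
  case False
  have t: "\<bar>Im (Ln z)\<bar> \<le> A" by (rule csector_arg[OF A False z])
  have "\<bar>b * Im (Ln z)\<bar> \<le> b * A" using t b by (simp add: abs_mult mult_left_mono)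
  then have "cos (b * A) \<le> cos \<bar>b * Im (Ln z)\<bar>" using b A by (subst cos_mono_le_eq) auto
  then have "cos (b * A) \<le> cos (b * Im (Ln z))" by simp
  then show ?thesis using False by (simp add: Re_powr_real mult_left_mono)
qed

lemma csector_not_nonpos:
  assumes A: "0 < A" "A < pi" and z: "z \<in> csector A" "z \<noteq> 0"
  shows "z \<notin> \<real>\<^sub>\<le>\<^sub>0"
proof
  assume "z \<in> \<real>\<^sub>\<le>\<^sub>0"
  then obtain x where x: "z = of_real x" "x \<le> 0" by (auto simp: nonpos_Reals_def)
  then have "x < 0" using z by auto
  have "cos A > -1"
    using cos_monotone_0_pi[of A pi] A by simp
  moreover have "- x * cos A \<le> x" using z x by (simp add: csector_def)
  then have "0 \<le> x * (1 + cos A)" by (simp add: algebra_simps)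
  moreover have "x * (1 + cos A) < 0" using \<open>x < 0\<close> calculation(1) by (intro mult_neg_pos) auto
  ultimately show False by linarith
qed

lemma growth_choice:
  fixes C M' \<kappa> \<gamma> \<beta> T :: real
  assumes g: "0 < \<gamma>" "\<gamma> < \<beta>" and \<kappa>: "\<kappa> > 0" and M': "M' > 0"
  shows "\<exists>R. R \<ge> T \<and> R \<ge> 1 \<and> C * exp (R powr \<gamma>) * exp (- (\<kappa> * R powr \<beta>)) \<le> M'"
proof -
  define C' where "C' = max C 0 + 1"
  have C': "C' > 0" "C \<le> C'" by (auto simp: C'_def)
  define L where "L = ln (C' / M')"
  define R1 where "R1 = (2 / \<kappa>) powr (1 / (\<beta> - \<gamma>))"
  define R2 where "R2 = (max L 1) powr (1 / \<gamma>)"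
  define R where "R = max (max R1 R2) (max T 1)"
  have R1: "R1 powr (\<beta> - \<gamma>) = 2 / \<kappa>" using g \<kappa> by (simp add: R1_def powr_powr)
  have R2: "R2 powr \<gamma> = max L 1" using g by (simp add: R2_def powr_powr)
  have R: "R \<ge> 1" "R \<ge> T" "R \<ge> R1" "R \<ge> R2" by (auto simp: R_def)
  have R1nn: "R1 \<ge> 0" "R2 \<ge> 0" by (auto simp: R1_def R2_def)
  have d: "R powr (\<beta> - \<gamma>) \<ge> 2 / \<kappa>"
    using powr_mono2[of "\<beta> - \<gamma>" R1 R] R R1 R1nn g by simp
  have e: "R powr \<gamma> \<ge> L"
    using powr_mono2[of \<gamma> R2 R] R R2 R1nn g by simp
  have Rb: "R powr \<beta> = R powr \<gamma> * R powr (\<beta> - \<gamma>)" using R by (simp add: powr_add[symmetric])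
  have Rgnn: "R powr \<gamma> \<ge> 0" by simp
  have "\<kappa> * R powr \<beta> \<ge> \<kappa> * (R powr \<gamma> * (2 / \<kappa>))"
    unfolding Rb using d Rgnn \<kappa> by (intro mult_left_mono) auto
  then have k2: "\<kappa> * R powr \<beta> \<ge> 2 * R powr \<gamma>" using \<kappa> by (simp add: field_simps)
  have "C * exp (R powr \<gamma>) * exp (- (\<kappa> * R powr \<beta>)) = C * exp (R powr \<gamma> - \<kappa> * R powr \<beta>)"
    by (simp add: exp_diff exp_minus field_simps)
  also have "\<dots> \<le> C' * exp (R powr \<gamma> - \<kappa> * R powr \<beta>)" using C' by (intro mult_right_mono) auto
  also have "\<dots> \<le> C' * exp (- L)" using k2 e C' by (intro mult_left_mono) auto
  also have "\<dots> = M'" using C' M' by (simp add: L_def exp_minus)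
  finally show ?thesis using R by blast
qed

lemma closure_sector: "closure (sector A) \<subseteq> csector A"
proof (rule closure_minimal)
  show "sector A \<subseteq> csector A" by (auto simp: sector_def csector_def)
  show "closed (csector A)" unfolding csector_def by (intro closed_Collect_le continuous_intros)
qed

lemma open_sector: "open (sector A)"
  unfolding sector_def by (intro open_Collect_less continuous_intros)

theorem PL:
  fixes H :: "complex \<Rightarrow> complex"
  assumes A: "0 < A" "A < pi"
    and b: "0 < \<gamma>" "\<gamma> < \<beta>" "\<beta> * A < pi/2"
    and hol: "\<And>z. z \<in> sector A \<Longrightarrow> H field_differentiable (at z)"
    and hc: "continuous_on (closure (sector A)) H"
    and fr: "\<And>z. z \<in> closure (sector A) \<Longrightarrow> z \<notin> sector A \<Longrightarrow> norm (H z) \<le> M"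
    and M: "M \<ge> 0"
    and gr: "\<And>z. z \<in> closure (sector A) \<Longrightarrow> norm z \<ge> R0 \<Longrightarrow> norm (H z) \<le> C * exp (norm z powr \<gamma>)"
    and z0: "z0 \<in> sector A"
  shows "norm (H z0) \<le> M"
proof (rule ccontr)
  assume neg: "\<not> ?thesis"
  define N0 where "N0 = norm (H z0)"
  have N0: "N0 > M" using neg by (simp add: N0_def)
  define M' where "M' = (M + N0) / 2"
  have M': "M < M'" "M' < N0" "M' > 0" using N0 M by (auto simp: M'_def)
  define K where "K = norm z0 powr \<beta>"
  have K: "K \<ge> 0" by (simp add: K_def)
  define Lq where "Lq = ln (N0 / M')"
  have Lq: "Lq > 0" using M' by (simp add: Lq_def)
  define eps where "eps = Lq / (K + 1)"
  have eps: "eps > 0" using Lq K by (simp add: eps_def)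
  have epsK: "eps * K < Lq"
  proof -
    have "eps * K = Lq * (K / (K + 1))" by (simp add: eps_def)
    also have "\<dots> < Lq * 1" using Lq K by (intro mult_strict_left_mono) auto
    finally show ?thesis by simp
  qed
  have bpos: "\<beta> > 0" using b by simp
  define c where "c = cos (\<beta> * A)"
  have bA0: "\<beta> * A > 0" using bpos A by simp
  have c: "c > 0" unfolding c_def using b bA0 pi_gt_zero by (intro cos_gt_zero_pi) linarith+
  have bA: "\<beta> * A \<le> pi" using b pi_gt_zero by linarith
  define E where "E z = exp (- complex_of_real eps * z powr complex_of_real \<beta>)" for z
  have E1: "norm (E z) \<le> exp (- eps * (norm z powr \<beta> * c))" if "z \<in> csector A" for z
  proof -
    have "norm z powr \<beta> * c \<le> Re (z powr complex_of_real \<beta>)"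
      unfolding c_def by (rule Re_powr_lb[OF A _ bA that]) (use bpos in simp)
    then show ?thesis using eps by (simp add: E_def norm_exp_eq_Re)
  qed
  have E1': "norm (E z) \<le> 1" if "z \<in> csector A" for z
  proof -
    have "exp (- eps * (norm z powr \<beta> * c)) \<le> 1" using eps c by (simp add: zero_le_mult_iff)
    then show ?thesis using E1[OF that] by linarith
  qed
  have E2: "norm (E z0) \<ge> exp (- eps * K)"
  proof -
    have "Re (z0 powr complex_of_real \<beta>) \<le> norm (z0 powr complex_of_real \<beta>)" by (rule complex_Re_le_cmod)
    also have "\<dots> = K" by (simp add: K_def norm_powr_real_powr')
    finally show ?thesis using eps by (simp add: E_def norm_exp_eq_Re)
  qed
  have cs: "closure (sector A) \<subseteq> csector A" by (rule closure_sector)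
  have E3: "E field_differentiable (at z)" if "z \<in> sector A" for z
  proof -
    have z0': "z \<noteq> 0" using that by (auto simp: sector_def)
    have "z \<in> csector A" using that by (auto simp: sector_def csector_def)
    then have nn: "z \<notin> \<real>\<^sub>\<le>\<^sub>0" using csector_not_nonpos[OF A] z0' by blast
    have "((\<lambda>z. exp (- complex_of_real eps * z powr complex_of_real \<beta>)) has_field_derivative
        exp (- complex_of_real eps * z powr complex_of_real \<beta>) * (- complex_of_real eps * (complex_of_real \<beta> * z powr (complex_of_real \<beta> - 1)))) (at z)"
      by (intro DERIV_chain2[OF DERIV_exp] DERIV_cmult has_field_derivative_powr nn)
    then show ?thesis unfolding field_differentiable_def E_def[abs_def] by blast
  qed
  have E4: "continuous_on (csector A) E"
  proof -
    have "csector A \<subseteq> {z. Re z \<ge> 0 \<or> Im z \<noteq> 0}"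
    proof
      fix z assume z: "z \<in> csector A"
      show "z \<in> {z. Re z \<ge> 0 \<or> Im z \<noteq> 0}"
      proof (cases "z = 0")
        case False
        then have "z \<notin> \<real>\<^sub>\<le>\<^sub>0" using csector_not_nonpos[OF A z] by blast
        then show ?thesis by (auto simp: nonpos_Reals_def complex_is_Real_iff complex_eq_iff)
      qed simp
    qed
    then have "continuous_on (csector A) (\<lambda>z. z powr complex_of_real \<beta>)"
      by (intro continuous_on_powr_complex continuous_intros) (use bpos in auto)
    then show ?thesis unfolding E_def[abs_def] by (intro continuous_on_exp continuous_on_mult continuous_on_const)
  qed
  obtain R where R: "R \<ge> max R0 (norm z0 + 1)" "R \<ge> 1"
      and Rb: "C * exp (R powr \<gamma>) * exp (- ((eps * c) * R powr \<beta>)) \<le> M'"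
    using growth_choice[OF b(1,2) mult_pos_pos[OF eps c] M'(3), of "max R0 (norm z0 + 1)" C] by blast
  define U where "U = sector A \<inter> ball 0 R"
  define G where "G z = H z * E z" for z
  have clU: "closure U \<subseteq> closure (sector A) \<inter> cball 0 R"
    by (rule closure_minimal) (auto simp: U_def intro: closure_subset[THEN subsetD])
  have "norm (G z0) \<le> M'"
  proof (rule maxprin[where h=G and U=U])
    show "bounded U" by (simp add: U_def bounded_Int)
    show "open U" by (simp add: U_def open_sector open_Int)
    show "continuous_on (closure U) G"
    proof -
      have "continuous_on (closure U) H" by (rule continuous_on_subset[OF hc]) (use clU in auto)
      moreover have "continuous_on (closure U) E" by (rule continuous_on_subset[OF E4]) (use clU cs in auto)
      ultimately show ?thesis unfolding G_def[abs_def] by (intro continuous_intros)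
    qed
    show "G field_differentiable (at z)" if "z \<in> U" for z
      unfolding G_def[abs_def] using that by (intro field_differentiable_mult hol E3) (auto simp: U_def)
    show "norm (G z) \<le> M'" if z: "z \<in> closure U" "z \<notin> U" for z
    proof -
      have zc: "z \<in> closure (sector A)" "norm z \<le> R" using z clU by auto
      have zcs: "z \<in> csector A" using zc cs by auto
      show ?thesis
      proof (cases "z \<in> sector A")
        case False
        have "norm (G z) = norm (H z) * norm (E z)" by (simp add: G_def norm_mult)
        also have "\<dots> \<le> M * 1" using fr[OF zc(1) False] E1'[OF zcs] using M by (intro mult_mono) auto
        finally show ?thesis using M' by simp
      next
        case True
        then have nz: "norm z = R" using z zc by (auto simp: U_def)
        have h1: "norm (H z) \<le> C * exp (R powr \<gamma>)" using gr[OF zc(1)] nz R by auto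
        have h2: "norm (E z) \<le> exp (- ((eps * c) * R powr \<beta>))" using E1[OF zcs] nz by (simp add: mult_ac)
        have "norm (G z) = norm (H z) * norm (E z)" by (simp add: G_def norm_mult)
        also have "\<dots> \<le> C * exp (R powr \<gamma>) * exp (- ((eps * c) * R powr \<beta>))"
          using h1 h2 by (intro mult_mono) (auto intro: order_trans[OF norm_ge_zero])
        finally show ?thesis using Rb by simp
      qed
    qed
    show "M' \<ge> 0" using M' by simp
    show "z0 \<in> U" using z0 R by (simp add: U_def)
  qed
  then have "N0 * exp (- eps * K) \<le> M'"
    using E2 by (simp add: G_def norm_mult N0_def) (metis order_trans mult_left_mono norm_ge_zero)
  moreover have "N0 * exp (- eps * K) > N0 * exp (- Lq)" using epsK M' by (intro mult_strict_left_mono) auto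
  moreover have "N0 * exp (- Lq) = M'" using M' by (simp add: Lq_def exp_minus)
  ultimately show False by simp
qed

lemma qnorm2: "(norm (q::quat))^2 = (fst q)^2 + (fst (snd q))^2 + (fst (snd (snd q)))^2 + (snd (snd (snd q)))^2"
  by (cases q) (simp add: norm_Pair)

lemma qnorm: "norm (q::quat) = sqrt ((fst q)^2 + (fst (snd q))^2 + (fst (snd (snd q)))^2 + (snd (snd (snd q)))^2)"
  by (metis qnorm2 norm_ge_zero real_sqrt_unique)

definition qconj :: "quat \<Rightarrow> quat" where "qconj q = (fst q, - fst (snd q), - fst (snd (snd q)), - snd (snd (snd q)))"

definition qcomp :: "quat \<Rightarrow> quat \<Rightarrow> complex" where
  "qcomp I q = Complex (fst q) (fst (snd I) * fst (snd q) + fst (snd (snd I)) * fst (snd (snd q)) + snd (snd (snd I)) * snd (snd (snd q)))"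

lemma imag_unitsD: "I \<in> imag_units \<Longrightarrow> fst I = 0 \<and> (fst (snd I))^2 + (fst (snd (snd I)))^2 + (snd (snd (snd I)))^2 = 1"
  by (auto simp: imag_units_def)

lemma qmult_norm: "norm (p \<star> q) = norm p * norm q"
proof -
  obtain a b c d where p: "p = (a,b,c,d)" by (cases p) auto
  obtain e f g h where q: "q = (e,f,g,h)" by (cases q) auto
  have "(norm (p \<star> q))^2 = (norm p * norm q)^2"
    unfolding power_mult_distrib qnorm2 p q by simp algebra
  then show ?thesis by (simp add: power2_eq_iff_nonneg)
qed

lemma qmult_assoc: "(p \<star> q) \<star> r = p \<star> (q \<star> r)"
  by (cases p, cases q, cases r) (simp add: algebra_simps)

lemma qmult_add_left: "(p + q) \<star> r = p \<star> r + q \<star> r"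
  by (cases p, cases q, cases r) (simp add: algebra_simps)

lemma qmult_add_right: "r \<star> (p + q) = r \<star> p + r \<star> q"
  by (cases p, cases q, cases r) (simp add: algebra_simps)

lemma qmult_scaleR_left: "(t *\<^sub>R p) \<star> r = t *\<^sub>R (p \<star> r)"
  by (cases p, cases r) (simp add: algebra_simps)

lemma qmult_minus_right: "r \<star> (- p) = - (r \<star> p)"
  by (cases p, cases r) (simp add: algebra_simps)

lemma qmult_II: assumes "I \<in> imag_units" shows "I \<star> (I \<star> v) = - v"
proof -
  obtain x1 x2 x3 where I: "I = (0,x1,x2,x3)" and n: "x1^2 + x2^2 + x3^2 = 1" using assms by (auto simp: imag_units_def)
  obtain a b c d where v: "v = (a,b,c,d)" by (cases v) auto
  have "I \<star> (I \<star> v) = (- (a * (x1^2 + x2^2 + x3^2)), - (b * (x1^2 + x2^2 + x3^2)), - (c * (x1^2 + x2^2 + x3^2)), - (d * (x1^2 + x2^2 + x3^2)))"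
    unfolding I v by simp algebra
  then show ?thesis using n v by simp
qed

lemma qcomp_I: assumes "I \<in> imag_units" shows "qcomp I (I \<star> v) = \<i> * qcomp I v"
proof -
  obtain x1 x2 x3 where I: "I = (0,x1,x2,x3)" and n: "x1^2 + x2^2 + x3^2 = 1" using assms by (auto simp: imag_units_def)
  obtain a b c d where v: "v = (a,b,c,d)" by (cases v) auto
  have e: "x1 * (x1 * a + x2 * d - x3 * c) + x2 * (x2 * a - x1 * d + x3 * b) + x3 * (x3 * a + x1 * c - x2 * b) = a * (x1^2 + x2^2 + x3^2)"
    by algebra
  show ?thesis unfolding I v qcomp_def using n e by (simp add: complex_eq_iff algebra_simps)
qed

lemma qcomp_norm: assumes "I \<in> imag_units" shows "norm (qcomp I v) \<le> norm v"
proof -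
  obtain x1 x2 x3 where I: "I = (0,x1,x2,x3)" and n: "x1^2 + x2^2 + x3^2 = 1" using assms by (auto simp: imag_units_def)
  obtain a b c d where v: "v = (a,b,c,d)" by (cases v) auto
  have cs: "(x1 * b + x2 * c + x3 * d)^2 \<le> (x1^2 + x2^2 + x3^2) * (b^2 + c^2 + d^2)"
  proof -
    have "(x1^2 + x2^2 + x3^2) * (b^2 + c^2 + d^2) - (x1 * b + x2 * c + x3 * d)^2
       = (x1*c - x2*b)^2 + (x1*d - x3*b)^2 + (x2*d - x3*c)^2" by algebra
    moreover have "(x1*c - x2*b)^2 + (x1*d - x3*b)^2 + (x2*d - x3*c)^2 \<ge> 0" by simp
    ultimately show ?thesis by linarith
  qed
  have "(norm (qcomp I v))^2 \<le> (norm v)^2"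
    unfolding qnorm2 I v qcomp_def using cs n by (simp add: cmod_power2)
  then show ?thesis by (simp add: power2_le_iff_abs_le)
qed

lemma qcomp_conj: "qcomp I (w \<star> qconj w) = complex_of_real ((norm w)^2)"
proof -
  obtain a b c d where w: "w = (a,b,c,d)" by (cases w) auto
  show ?thesis unfolding w qcomp_def qconj_def qnorm2 by (simp add: complex_eq_iff algebra_simps power2_eq_square)
qed

lemma qconj_norm: "norm (qconj w) = norm w"
  unfolding qnorm qconj_def by simp

lemma bl_qmult_right: "bounded_linear (\<lambda>q. q \<star> c)"
  by (rule bounded_linear_intro[where K="norm c"]) (simp_all add: qmult_add_left qmult_scaleR_left qmult_norm)

lemma bl_qcomp: assumes "I \<in> imag_units" shows "bounded_linear (qcomp I)"
proof (rule bounded_linear_intro[where K=1])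
  fix x y show "qcomp I (x + y) = qcomp I x + qcomp I y"
    by (cases x, cases y) (simp add: qcomp_def complex_eq_iff algebra_simps)
  fix r x show "qcomp I (r *\<^sub>R x) = r *\<^sub>R qcomp I x"
    by (cases x) (simp add: qcomp_def complex_eq_iff algebra_simps)
  fix x show "norm (qcomp I x) \<le> norm x * 1" using qcomp_norm[OF assms] by simp
qed

definition iota :: "quat \<Rightarrow> complex \<Rightarrow> quat" where "iota I z = slice_pt I (Re z) (Im z)"

lemma iota_eq: "iota I z = (Re z, Im z * fst (snd I), Im z * fst (snd (snd I)), Im z * snd (snd (snd I)))"
  if "fst I = 0" using that by (cases I) (simp add: iota_def slice_pt_def qreal_def)

lemma norm_iota: assumes "I \<in> imag_units" shows "norm (iota I z) = norm z"
proof -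
  obtain x1 x2 x3 where I: "I = (0,x1,x2,x3)" and n: "x1^2 + x2^2 + x3^2 = 1" using assms by (auto simp: imag_units_def)
  have "(norm (iota I z))^2 = (Re z)^2 + (Im z)^2 * (x1^2 + x2^2 + x3^2)"
    unfolding qnorm2 iota_eq[of I, OF I[THEN arg_cong[where f=fst], simplified]] by (simp add: I power_mult_distrib algebra_simps)
  also have "\<dots> = (norm z)^2" using n by (simp add: cmod_power2)
  finally show ?thesis by (simp add: power2_eq_iff_nonneg)
qed

lemma continuous_iota: "continuous_on S (iota I)"
  unfolding iota_def slice_pt_def qreal_def by (intro continuous_intros)

lemma Im_eq_norm_sin_Ln: "z \<noteq> 0 \<Longrightarrow> Im z = norm z * sin (Im (Ln z))"
proof -
  assume z: "z \<noteq> 0"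
  have "Im z = Im (exp (Ln z))" using z by (simp add: exp_Ln)
  also have "\<dots> = norm z * sin (Im (Ln z))" unfolding Im_exp using z by (simp del: exp_Ln)
  finally show ?thesis .
qed

lemma sector_to_cone:
  assumes A: "0 < \<phi>/2" "\<phi>/2 < pi" and I: "I \<in> imag_units" and z: "z \<in> sector (\<phi>/2)"
  shows "iota I z \<in> circ_cone \<phi>"
proof -
  have z0: "z \<noteq> 0" using z by (auto simp: sector_def)
  define \<theta> where "\<theta> = Im (Ln z)"
  have nz: "norm z > 0" using z0 by simp
  have "norm z * cos (\<phi>/2) < norm z * cos \<theta>" using z Re_eq_norm_cos_Ln[OF z0] by (simp add: sector_def \<theta>_def)
  then have "cos (\<phi>/2) < cos \<bar>\<theta>\<bar>" using nz by (simp add: mult_less_cancel_left_pos)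
  moreover have "\<bar>\<theta>\<bar> \<le> pi" using mpi_less_Im_Ln[of z] Im_Ln_le_pi[of z] z0 by (auto simp: \<theta>_def)
  ultimately have th: "\<bar>\<theta>\<bar> < \<phi>/2" using cos_mono_less_eq[of "\<phi>/2" "\<bar>\<theta>\<bar>"] A by simp
  have "iota I z = norm z *\<^sub>R qexpI I \<theta>"
    using Re_eq_norm_cos_Ln[OF z0] Im_eq_norm_sin_Ln[OF z0]
    by (simp add: iota_def qexpI_def slice_pt_def qreal_def \<theta>_def scaleR_add_right)
  then show ?thesis unfolding circ_cone_def using nz th I by blast
qed

lemma cone_to_sector:
  assumes A: "0 < \<phi>/2" "\<phi>/2 < pi" and I: "I \<in> imag_units" and z: "iota I z \<in> circ_cone \<phi>"
  shows "z \<in> sector (\<phi>/2)"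
proof -
  obtain \<rho> J t where eq: "iota I z = \<rho> *\<^sub>R qexpI J t" and \<rho>: "\<rho> > 0" and t: "\<bar>t\<bar> < \<phi>/2" and J: "J \<in> imag_units"
    using z unfolding circ_cone_def by blast
  obtain x1 x2 x3 where Ie: "I = (0,x1,x2,x3)" and n: "x1^2 + x2^2 + x3^2 = 1" using I by (auto simp: imag_units_def)
  obtain y1 y2 y3 where Je: "J = (0,y1,y2,y3)" and m: "y1^2 + y2^2 + y3^2 = 1" using J by (auto simp: imag_units_def)
  from eq have c: "Re z = \<rho> * cos t" "Im z * x1 = \<rho> * sin t * y1" "Im z * x2 = \<rho> * sin t * y2" "Im z * x3 = \<rho> * sin t * y3"
    by (simp_all add: iota_def qexpI_def slice_pt_def qreal_def Ie Je)
  have "(Im z)^2 = (Im z)^2 * (x1^2 + x2^2 + x3^2)" using n by simp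
  also have "\<dots> = (Im z * x1)^2 + (Im z * x2)^2 + (Im z * x3)^2" by algebra
  also have "\<dots> = (\<rho> * sin t)^2 * (y1^2 + y2^2 + y3^2)" unfolding c by algebra
  finally have "(Im z)^2 = (\<rho> * sin t)^2" using m by simp
  then have "(norm z)^2 = \<rho>^2" using c(1) by (simp add: cmod_power2 power_mult_distrib algebra_simps sin_squared_eq)
  then have nz: "norm z = \<rho>" using \<rho> by (simp add: power2_eq_iff_nonneg)
  have "cos (\<phi>/2) < cos \<bar>t\<bar>" using t A by (intro cos_monotone_0_pi) auto
  then have "\<rho> * cos (\<phi>/2) < \<rho> * cos t" using \<rho> by simp
  then show ?thesis unfolding sector_def using nz c(1) by simp
qed

theorem theorem3p2:
  fixes \<alpha> :: real and f :: "quat \<Rightarrow> quat" and M :: real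
  assumes "\<alpha> > 1/2"
    and "slice_regular f (circ_cone (pi / \<alpha>))"
    and "continuous_on (closure (circ_cone (pi / \<alpha>))) f"
    and "slice_order f (circ_cone (pi / \<alpha>)) < ereal \<alpha>"
    and "M \<ge> 0"
    and "\<forall>q \<in> frontier (circ_cone (pi / \<alpha>)). norm (f q) \<le> M"
  shows "\<forall>q \<in> circ_cone (pi / \<alpha>). norm (f q) \<le> M"
proof
  note a = assms
  define \<Omega> where "\<Omega> = circ_cone (pi / \<alpha>)"
  define A where "A = (pi / \<alpha>) / 2"
  have \<alpha>0: "\<alpha> > 0" using a(1) by simp
  have A: "0 < A" "A < pi"
  proof -
    show "0 < A" using \<alpha>0 by (simp add: A_def)
    have "pi / \<alpha> < 2 * pi" using a(1) \<alpha>0 by (simp add: divide_less_eq)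
    then show "A < pi" by (simp add: A_def)
  qed
  have A': "0 < (pi / \<alpha>) / 2" "(pi / \<alpha>) / 2 < pi" using A by (simp_all add: A_def)
  have oO: "open \<Omega>" using a(2) by (simp add: slice_regular_def \<Omega>_def)
  fix q0 assume q0: "q0 \<in> circ_cone (pi / \<alpha>)"
  obtain r I \<theta> where q0e: "q0 = r *\<^sub>R qexpI I \<theta>" and r: "r > 0" and th: "\<bar>\<theta>\<bar> < (pi / \<alpha>) / 2" and I: "I \<in> imag_units"
    using q0 unfolding circ_cone_def by blast
  define z0 where "z0 = Complex (r * cos \<theta>) (r * sin \<theta>)"
  have iz0: "iota I z0 = q0"
    by (simp add: q0e z0_def iota_def qexpI_def slice_pt_def qreal_def scaleR_add_right)
  have z0S: "z0 \<in> sector A"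
    unfolding A_def by (rule cone_to_sector[OF A' I]) (use iz0 q0 in simp)
  define w where "w = f q0"
  show "norm (f q0) \<le> M"
  proof (cases "w = 0")
    case True then show ?thesis using a(5) by (simp add: w_def)
  next
    case False
    define c where "c = qconj w"
    define H where "H z = qcomp I (f (iota I z) \<star> c)" for z
    have blc: "bounded_linear (\<lambda>q. q \<star> c)" by (rule bl_qmult_right)
    have blq: "bounded_linear (qcomp I)" by (rule bl_qcomp[OF I])
    have Hn: "norm (H z) \<le> norm (f (iota I z)) * norm w" for z
    proof -
      have "norm (H z) \<le> norm (f (iota I z) \<star> c)" unfolding H_def by (rule qcomp_norm[OF I])
      also have "\<dots> = norm (f (iota I z)) * norm w" by (simp add: qmult_norm c_def qconj_norm)
      finally show ?thesis .
    qed
    have iS: "iota I z \<in> \<Omega>" if "z \<in> sector A" for z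
      unfolding \<Omega>_def by (rule sector_to_cone[OF A' I]) (use that in \<open>simp add: A_def\<close>)
    have icl: "iota I ` closure (sector A) \<subseteq> closure \<Omega>"
      by (rule image_closure_subset[OF continuous_iota closed_closure]) (use iS closure_subset in blast)
    have cs: "closure (sector A) \<subseteq> csector A" by (rule closure_sector)
    have hol: "H field_differentiable (at z)" if z: "z \<in> sector A" for z
    proof -
      define F2 where "F2 = (\<lambda>(s, t). f (slice_pt I s t))"
      have "slice_pt I (Re z) (Im z) \<in> \<Omega>" using iS[OF z] by (simp add: iota_def)
      then obtain D where D: "(F2 has_derivative D) (at (Re z, Im z))" and CR: "(1/2) *\<^sub>R (D (1, 0) + I \<star> D (0, 1)) = 0"
        using a(2) I unfolding slice_regular_def \<Omega>_def F2_def by blast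
      have CR': "D (1, 0) + I \<star> D (0, 1) = 0" using CR by simp
      have blD: "bounded_linear D" using D by (rule has_derivative_bounded_linear)
      have D01: "D (0, 1) = I \<star> D (1, 0)"
      proof -
        have "D (1, 0) = - (I \<star> D (0, 1))" using CR' by (simp add: eq_neg_iff_add_eq_0)
        then have "I \<star> D (1, 0) = - (I \<star> (I \<star> D (0, 1)))" by (simp add: qmult_minus_right)
        then show ?thesis using qmult_II[OF I] by simp
      qed
      have blRI: "bounded_linear (\<lambda>h::complex. (Re h, Im h))"
        by (intro bounded_linear_Pair bounded_linear_Re bounded_linear_Im)
      have h1: "((\<lambda>z. (Re z, Im z)) has_derivative (\<lambda>h. (Re h, Im h))) (at z)"
        by (rule bounded_linear_imp_has_derivative[OF blRI])
      have h3: "((F2 \<circ> (\<lambda>z. (Re z, Im z))) has_derivative (D \<circ> (\<lambda>h. (Re h, Im h)))) (at z)"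
        by (rule diff_chain_at[OF h1 D])
      have h4: "((\<lambda>z. qcomp I ((F2 \<circ> (\<lambda>z. (Re z, Im z))) z \<star> c)) has_derivative
                  (\<lambda>h. qcomp I ((D \<circ> (\<lambda>h. (Re h, Im h))) h \<star> c))) (at z)"
        by (rule bounded_linear.has_derivative[OF blq bounded_linear.has_derivative[OF blc h3]])
      have Heq: "(\<lambda>z. qcomp I ((F2 \<circ> (\<lambda>z. (Re z, Im z))) z \<star> c)) = H"
        by (rule ext) (simp add: F2_def H_def iota_def)
      define Av where "Av = qcomp I (D (1, 0) \<star> c)"
      have Deq: "(\<lambda>h. qcomp I ((D \<circ> (\<lambda>h. (Re h, Im h))) h \<star> c)) = (*) Av"
      proof (rule ext)
        fix h :: complex
        have "D (Re h, Im h) = D (Re h *\<^sub>R (1, 0) + Im h *\<^sub>R (0::real, 1::real))" by simp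
        also have "\<dots> = Re h *\<^sub>R D (1, 0) + Im h *\<^sub>R D (0, 1)"
          by (simp only: linear_add[OF bounded_linear.linear[OF blD]] linear_scale[OF bounded_linear.linear[OF blD]])
        finally have "D (Re h, Im h) = Re h *\<^sub>R D (1, 0) + Im h *\<^sub>R D (0, 1)" .
        then have "qcomp I (D (Re h, Im h) \<star> c) = Re h *\<^sub>R qcomp I (D (1, 0) \<star> c) + Im h *\<^sub>R qcomp I (D (0, 1) \<star> c)"
          by (simp add: qmult_add_left qmult_scaleR_left linear_add[OF bounded_linear.linear[OF blq]] linear_scale[OF bounded_linear.linear[OF blq]])
        also have "qcomp I (D (0, 1) \<star> c) = \<i> * Av"
          unfolding D01 qmult_assoc Av_def by (rule qcomp_I[OF I])
        also have "Re h *\<^sub>R qcomp I (D (1, 0) \<star> c) + Im h *\<^sub>R (\<i> * Av) = Av * h"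
          unfolding Av_def[symmetric] by (simp add: complex_eq_iff algebra_simps)
        finally show "qcomp I ((D \<circ> (\<lambda>h. (Re h, Im h))) h \<star> c) = Av * h" by simp
      qed
      from h4 have "(H has_field_derivative Av) (at z)" unfolding Heq Deq has_field_derivative_def .
      then show ?thesis unfolding field_differentiable_def by blast
    qed
    have hc: "continuous_on (closure (sector A)) H"
    proof -
      have "continuous_on (closure (sector A)) (\<lambda>z. f (iota I z))"
        by (rule continuous_on_compose2[OF a(3)[folded \<Omega>_def] continuous_iota]) (use icl in blast)
      then show ?thesis unfolding H_def
        by (intro bounded_linear.continuous_on[OF blq] bounded_linear.continuous_on[OF blc])
    qed
    have fr: "norm (H z) \<le> M * norm w" if z: "z \<in> closure (sector A)" "z \<notin> sector A" for z
    proof -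
      have "iota I z \<in> closure \<Omega>" using icl z by blast
      moreover have "iota I z \<notin> \<Omega>"
      proof
        assume "iota I z \<in> \<Omega>"
        then have "z \<in> sector ((pi/\<alpha>)/2)" unfolding \<Omega>_def by (rule cone_to_sector[OF A' I])
        then show False using z by (simp add: A_def)
      qed
      ultimately have "iota I z \<in> frontier \<Omega>" using oO by (simp add: frontier_def interior_open)
      then have "norm (f (iota I z)) \<le> M" using a(6) by (simp add: \<Omega>_def)
      then show ?thesis using Hn[of z] by (meson mult_right_mono norm_ge_zero order_trans)
    qed
    define Mf where "Mf r = max_mod f \<Omega> r" for r
    have bdd: "bdd_above ((\<lambda>q. norm (f q)) ` {q \<in> closure \<Omega>. norm q = \<rho>})" for \<rho>
    proof -
      have eqs: "{q \<in> closure \<Omega>. norm q = \<rho>} = closure \<Omega> \<inter> sphere 0 \<rho>" by auto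
      have cpt: "compact {q \<in> closure \<Omega>. norm q = \<rho>}" unfolding eqs
        by (intro closed_Int_compact closed_closure compact_sphere)
      have "continuous_on {q \<in> closure \<Omega>. norm q = \<rho>} (\<lambda>q. norm (f q))"
        by (intro continuous_on_norm continuous_on_subset[OF a(3)[folded \<Omega>_def]]) auto
      from compact_continuous_image[OF this cpt] show ?thesis
        by (intro bounded_imp_bdd_above compact_imp_bounded)
    qed
    have fMf: "norm (f q) \<le> Mf (norm q)" if "q \<in> closure \<Omega>" for q
      unfolding Mf_def max_mod_def by (rule cSup_upper) (use that bdd in auto)
    obtain g0 where g0: "slice_order f \<Omega> < ereal g0" "ereal g0 < ereal \<alpha>"
      using ereal_dense2[OF a(4)[folded \<Omega>_def]] by blast
    define \<gamma> where "\<gamma> = max g0 (\<alpha>/2)"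
    define \<beta> where "\<beta> = (\<gamma> + \<alpha>) / 2"
    have g: "0 < \<gamma>" "\<gamma> < \<beta>" "\<beta> < \<alpha>" using g0 \<alpha>0 by (auto simp: \<gamma>_def \<beta>_def)
    have bA: "\<beta> * A < pi / 2"
    proof -
      have "\<beta> * A = (\<beta> / \<alpha>) * (pi / 2)" by (simp add: A_def)
      also have "\<dots> < 1 * (pi / 2)" using g \<alpha>0 by (intro mult_strict_right_mono) auto
      finally show ?thesis by simp
    qed
    have "slice_order f \<Omega> < ereal \<gamma>" using g0(1) by (rule order_less_le_trans) (simp add: \<gamma>_def)
    then have "eventually (\<lambda>r. ereal (lnp (lnp (Mf r)) / ln r) < ereal \<gamma>) at_top"
      unfolding slice_order_def Mf_def by (rule Limsup_lessD)
    then obtain N where N: "\<And>r. r \<ge> N \<Longrightarrow> lnp (lnp (Mf r)) / ln r < \<gamma>"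
      unfolding eventually_at_top_linorder by auto
    define R0 where "R0 = max N 2"
    have growth: "Mf r \<le> exp 1 * exp (r powr \<gamma>)" if r: "r \<ge> R0" for r
    proof (cases "Mf r \<le> exp 1")
      case True
      moreover have "exp 1 \<le> exp 1 * exp (r powr \<gamma>)" by simp
      ultimately show ?thesis by linarith
    next
      case False
      have r1: "r > 1" using r by (simp add: R0_def)
      have lr: "ln r > 0" using r1 by simp
      have Mg: "Mf r > exp 1" using False by simp
      have "exp 1 > (1::real)" by simp
      then have Mg1: "Mf r > 1" using Mg by linarith
      have l1: "lnp (Mf r) = ln (Mf r)" using Mg1 by (simp add: lnp_def)
      have lM: "ln (Mf r) > 1" using Mg by (metis exp_gt_zero ln_exp ln_less_cancel_iff less_trans)
      have l2: "lnp (lnp (Mf r)) = ln (ln (Mf r))" using lM Mg1 by (simp add: l1 lnp_def)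
      have "ln (ln (Mf r)) / ln r < \<gamma>" using N[of r] r l2 by (simp add: R0_def)
      then have "ln (ln (Mf r)) < \<gamma> * ln r" using lr by (simp add: divide_less_eq)
      then have "ln (Mf r) < exp (\<gamma> * ln r)" using lM by (metis exp_ln less_trans zero_less_one exp_less_cancel_iff)
      also have "\<dots> = r powr \<gamma>" using r1 by (simp add: powr_def)
      finally have "Mf r < exp (r powr \<gamma>)" using Mg1 by (metis exp_ln less_trans zero_less_one exp_less_cancel_iff)
      moreover have "exp (r powr \<gamma>) \<le> exp 1 * exp (r powr \<gamma>)" by simp
      ultimately show ?thesis by linarith
    qed
    have gr: "norm (H z) \<le> (norm w * exp 1) * exp (norm z powr \<gamma>)" if z: "z \<in> closure (sector A)" "norm z \<ge> R0" for z
    proof -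
      have iz: "iota I z \<in> closure \<Omega>" using icl z by blast
      have "norm (f (iota I z)) \<le> Mf (norm z)" using fMf[OF iz] norm_iota[OF I] by simp
      also have "\<dots> \<le> exp 1 * exp (norm z powr \<gamma>)" by (rule growth[OF z(2)])
      finally have "norm (f (iota I z)) * norm w \<le> exp 1 * exp (norm z powr \<gamma>) * norm w"
        by (rule mult_right_mono) simp
      then show ?thesis using Hn[of z] by (simp add: mult_ac)
    qed
    have "norm (H z0) \<le> M * norm w"
      by (rule PL[OF A g(1,2) bA hol hc fr _ gr z0S]) (use a(5) in simp_all)
    moreover have "H z0 = complex_of_real ((norm w)^2)"
      unfolding H_def iz0 c_def w_def by (rule qcomp_conj)
    ultimately have "(norm w)^2 \<le> M * norm w" by (simp only: norm_of_real abs_power2 abs_norm_cancel)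
    then have "norm w * norm w \<le> M * norm w" by (simp add: power2_eq_square)
    then show ?thesis using False by (simp add: w_def mult_le_cancel_right_pos)
  qed
qed

end
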